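(* Let $A$ be a nonempty set of positive integers and $n$ a positive integer. Then (a) $\displaystyle\sum_{k=1}^{n}N^p_A(k)\big(q^e_A(n-k)-q^o_A(n-k)\big)=\tau_A(n)$; (b) $\displaystyle\sum_{k=1}^{n}N^q_A(k)\big(p^e_A(n-k)-p^o_A(n-k)\big)=\tau^s_A(n)$.
   Context: For a set $A$ of positive integers: $N^p_A(n)$ (resp. $N^q_A(n)$) is the total number of parts, summed over all partitions (resp. partitions into pairwise distinct parts) of $n$ with all parts in $A$. $p^e_A(n)$ (resp. $p^o_A(n)$) is the number of partitions of $n$ with parts in $A$ having an even (resp. odd) number of parts; $q^e_A(n)$, $q^o_A(n)$ are the analogous counts for partitions into distinct parts from $A$; conventions $p^e_A(0)=q^e_A(0)=1$, $p^o_A(0)=q^o_A(0)=0$. $\tau_A(n)=\#\{a\in A:a\mid n\}$ and $\tau^s_A(n)=\sum_{a\in A,\,a\mid n}(-1)^{n/a-1}$. *)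

theory Defs
  imports Main "HOL-Library.Multiset"
begin

definition partitions_A :: "nat set \<Rightarrow> nat \<Rightarrow> nat multiset set" where
  "partitions_A A n = {M. set_mset M \<subseteq> A \<and> sum_mset M = n}"

definition dpartitions_A :: "nat set \<Rightarrow> nat \<Rightarrow> nat multiset set" where
  "dpartitions_A A n = {M. set_mset M \<subseteq> A \<and> sum_mset M = n \<and> (\<forall>x. count M x \<le> 1)}"

definition Np :: "nat set \<Rightarrow> nat \<Rightarrow> nat" where
  "Np A n = (\<Sum>M\<in>partitions_A A n. size M)"

definition Nq :: "nat set \<Rightarrow> nat \<Rightarrow> nat" where
  "Nq A n = (\<Sum>M\<in>dpartitions_A A n. size M)"

definition pe :: "nat set \<Rightarrow> nat \<Rightarrow> nat" where
  "pe A n = card {M\<in>partitions_A A n. even (size M)}"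

definition po :: "nat set \<Rightarrow> nat \<Rightarrow> nat" where
  "po A n = card {M\<in>partitions_A A n. odd (size M)}"

definition qe :: "nat set \<Rightarrow> nat \<Rightarrow> nat" where
  "qe A n = card {M\<in>dpartitions_A A n. even (size M)}"

definition qo :: "nat set \<Rightarrow> nat \<Rightarrow> nat" where
  "qo A n = card {M\<in>dpartitions_A A n. odd (size M)}"

definition tauA :: "nat set \<Rightarrow> nat \<Rightarrow> nat" where
  "tauA A n = card {a\<in>A. a dvd n}"

definition tauA_s :: "nat set \<Rightarrow> nat \<Rightarrow> int" where
  "tauA_s A n = (\<Sum>a\<in>{a\<in>A. a dvd n}. (-1::int) ^ (n div a - 1))"

end

theory Submission
  imports Defs
begin

lemma size_le_sum_mset: "0 \<notin># M \<Longrightarrow> size M \<le> sum_mset (M::nat multiset)"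
proof (induction M)
  case empty then show ?case by simp
next
  case (add x M) then show ?case by (cases x) auto
qed

lemma finite_bounded_msets: "finite {M::nat multiset. set_mset M \<subseteq> {1..m} \<and> size M \<le> m}"
proof -
  have "{M::nat multiset. set_mset M \<subseteq> {1..m} \<and> size M \<le> m}
        \<subseteq> mset ` {xs. set xs \<subseteq> {1..m} \<and> length xs \<le> m}"
  proof
    fix M :: "nat multiset" assume "M \<in> {M. set_mset M \<subseteq> {1..m} \<and> size M \<le> m}"
    then show "M \<in> mset ` {xs. set xs \<subseteq> {1..m} \<and> length xs \<le> m}"
      by (intro image_eqI[of _ _ "sorted_list_of_multiset M"]) (auto simp flip: size_mset)
  qed
  then show ?thesis by (rule finite_subset) (intro finite_imageI finite_lists_length_le, simp)
qed

lemma finite_msets_sum: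
  assumes "0 \<notin> B"
  shows "finite {M::nat multiset. set_mset M \<subseteq> B \<and> sum_mset M = m}"
proof (rule finite_subset[OF _ finite_bounded_msets[of m]], safe)
  fix M :: "nat multiset" and x
  assume h: "set_mset M \<subseteq> B" "x \<in># M"
  then have "x \<noteq> 0" using assms by (metis subsetD)
  moreover have "x \<le> sum_mset M" using h(2) by (simp add: sum_mset.remove)
  ultimately show "x \<in> {1..sum_mset M}" by auto
next
  fix M :: "nat multiset" assume "set_mset M \<subseteq> B"
  then show "size M \<le> sum_mset M" using assms by (intro size_le_sum_mset) auto
qed

lemma finite_PA: "0 \<notin> A \<Longrightarrow> finite (partitions_A A m)"
  unfolding partitions_A_def by (rule finite_msets_sum)

lemma finite_DA: "0 \<notin> A \<Longrightarrow> finite (dpartitions_A A m)"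
  unfolding dpartitions_A_def
  by (rule finite_subset[OF _ finite_msets_sum[of A m]]) auto

lemma card_even_odd:
  assumes "finite P"
  shows "int (card {M\<in>P. even (size M)}) - int (card {M\<in>P. odd (size M)})
         = (\<Sum>M\<in>P. (-1::int) ^ size (M::'a multiset))"
proof -
  have "(\<Sum>M\<in>P. (-1::int) ^ size M) = (\<Sum>M\<in>P. (if even (size M) then 1 else 0) - (if odd (size M) then 1 else 0))"
    by (rule sum.cong) auto
  also have "\<dots> = int (card {M\<in>P. even (size M)}) - int (card {M\<in>P. odd (size M)})"
    using assms by (simp add: sum_subtractf sum.If_cases Int_def conj_commute)
  finally show ?thesis by simp
qed

lemma sum_invol:
  fixes f :: "'a \<Rightarrow> int"
  assumes "finite X" "F \<subseteq> X"
    and "\<And>x. x \<in> X - F \<Longrightarrow> \<iota> x \<in> X - F"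
    and "\<And>x. x \<in> X - F \<Longrightarrow> \<iota> (\<iota> x) = x"
    and "\<And>x. x \<in> X - F \<Longrightarrow> f (\<iota> x) = - f x"
  shows "sum f X = sum f F"
proof -
  have "sum f (X - F) = sum (\<lambda>x. f (\<iota> x)) (X - F)"
    by (rule sum.reindex_bij_witness[where i = \<iota> and j = \<iota>]) (use assms in auto)
  also have "\<dots> = - sum f (X - F)" using assms(5) by (simp add: sum_negf)
  finally have "sum f (X - F) = 0" by simp
  then show ?thesis using assms(1,2) by (simp add: sum.subset_diff[of F X f])
qed

definition tog :: "nat set \<Rightarrow> nat multiset \<times> nat multiset \<Rightarrow> nat multiset \<times> nat multiset" where
  "tog E x = (case x of (U, D) \<Rightarrow> let b = Min ((set_mset U \<union> set_mset D) - E) in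
      if b \<in># D then (U + {#b#}, D - {#b#}) else (U - {#b#}, D + {#b#}))"

lemma tog_props:
  assumes dist: "\<forall>y. count D y \<le> 1" and dE: "set_mset D \<inter> E = {}"
    and ne: "(set_mset U \<union> set_mset D) - E \<noteq> {}"
    and t: "tog E (U, D) = (U', D')"
  shows "tog E (U', D') = (U, D)" "\<forall>y. count D' y \<le> 1" "set_mset D' \<inter> E = {}"
    "set_mset U' \<union> set_mset D' = set_mset U \<union> set_mset D"
    "sum_mset U' + sum_mset D' = sum_mset U + sum_mset D"
    "odd (size U') \<longleftrightarrow> even (size U)" "odd (size D') \<longleftrightarrow> even (size D)"
proof -
  define b where "b = Min ((set_mset U \<union> set_mset D) - E)"
  have bin: "b \<in> (set_mset U \<union> set_mset D) - E" unfolding b_def using ne by (intro Min_in) auto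
  have "(tog E (U', D') = (U, D) \<and> (\<forall>y. count D' y \<le> 1) \<and> set_mset D' \<inter> E = {} \<and>
    set_mset U' \<union> set_mset D' = set_mset U \<union> set_mset D \<and>
    sum_mset U' + sum_mset D' = sum_mset U + sum_mset D \<and>
    (odd (size U') \<longleftrightarrow> even (size U)) \<and> (odd (size D') \<longleftrightarrow> even (size D)))"
  proof (cases "b \<in># D")
    case True
    then have UD: "U' = U + {#b#}" "D' = D - {#b#}" using t b_def unfolding tog_def by (auto simp: Let_def)
    have cb: "count D b = 1" using True dist by (metis count_eq_zero_iff le_antisym less_one not_le)
    have nb: "b \<notin># D'" using cb UD by (simp add: not_in_iff)
    have sets: "set_mset U' \<union> set_mset D' = set_mset U \<union> set_mset D"
    proof -
      have "set_mset D' = set_mset D - {b}" using cb UD by (auto simp: in_diff_count split: if_splits)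
      then show ?thesis using UD True by auto
    qed
    have "b = Min ((set_mset U' \<union> set_mset D') - E)" using sets b_def by simp
    then have "tog E (U', D') = (U' - {#b#}, D' + {#b#})" using nb unfolding tog_def by (simp add: Let_def)
    then have t2: "tog E (U', D') = (U, D)" using UD True by simp
    have "size D' = size D - 1" "size D \<ge> 1" using UD True by (auto simp: size_Diff_singleton dest: size_Diff1_less)
    then show ?thesis using t2 sets UD dist dE True
      by (auto simp: sum_mset.remove[OF True] diff_le_self dest: in_diffD intro: order.trans[OF _ dist[rule_format]])
  next
    case False
    then have UD: "U' = U - {#b#}" "D' = D + {#b#}" using t b_def unfolding tog_def by (auto simp: Let_def)
    have bU: "b \<in># U" using False bin by auto
    have sets: "set_mset U' \<union> set_mset D' = set_mset U \<union> set_mset D"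
      using UD bU by (auto simp: in_diff_count dest: in_diffD)
    have "b = Min ((set_mset U' \<union> set_mset D') - E)" using sets b_def by simp
    then have "tog E (U', D') = (U' + {#b#}, D' - {#b#})" using UD unfolding tog_def by (simp add: Let_def)
    then have t2: "tog E (U', D') = (U, D)" using UD bU by (simp add: insert_DiffM2)
    have "size U' = size U - 1" "size U \<ge> 1" using UD bU by (auto simp: size_Diff_singleton dest: size_Diff1_less)
    moreover have "\<forall>y. count D' y \<le> 1" using UD False dist by (auto simp: not_in_iff)
    ultimately show ?thesis using t2 sets UD dE bin bU
      by (auto simp: sum_mset.remove[OF bU]) 
  qed
  then show "tog E (U', D') = (U, D)" "\<forall>y. count D' y \<le> 1" "set_mset D' \<inter> E = {}"
    "set_mset U' \<union> set_mset D' = set_mset U \<union> set_mset D"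
    "sum_mset U' + sum_mset D' = sum_mset U + sum_mset D"
    "odd (size U') \<longleftrightarrow> even (size U)" "odd (size D') \<longleftrightarrow> even (size D)" by auto
qed

definition XS :: "nat set \<Rightarrow> nat set \<Rightarrow> nat \<Rightarrow> (nat multiset \<times> nat multiset) set" where
  "XS B E m = {(U, D). set_mset U \<subseteq> B \<and> set_mset D \<subseteq> B - E \<and> (\<forall>x. count D x \<le> 1)
     \<and> sum_mset U + sum_mset D = m}"

lemma finite_XS:
  assumes "0 \<notin> B" shows "finite (XS B E m)"
proof -
  let ?Bd = "{M::nat multiset. set_mset M \<subseteq> {1..m} \<and> size M \<le> m}"
  have "XS B E m \<subseteq> ?Bd \<times> ?Bd"
  proof (rule subsetI)
    fix p assume hp: "p \<in> XS B E m"
    obtain U D where pUD: "p = (U, D)" by (cases p)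
    note h = hp[unfolded pUD]
    then have sU: "set_mset U \<subseteq> B" and sD: "set_mset D \<subseteq> B" and sm: "sum_mset U + sum_mset D = m"
      unfolding XS_def by auto
    have "size U \<le> sum_mset U" using sU assms by (intro size_le_sum_mset) auto
    moreover have "size D \<le> sum_mset D" using sD assms by (intro size_le_sum_mset) auto
    moreover have "x \<in> {1..m}" if "x \<in># U" for x
    proof -
      have "x \<noteq> 0" using sU that assms by (metis subsetD)
      moreover have "x \<le> sum_mset U" using that by (simp add: sum_mset.remove)
      ultimately show ?thesis using sm by auto
    qed
    moreover have "x \<in> {1..m}" if "x \<in># D" for x
    proof -
      have "x \<noteq> 0" using sD that assms by (metis subsetD)
      moreover have "x \<le> sum_mset D" using that by (simp add: sum_mset.remove)
      ultimately show ?thesis using sm by auto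
    qed
    ultimately show "p \<in> ?Bd \<times> ?Bd" using sm pUD by auto
  qed
  then show ?thesis by (rule finite_subset) (intro finite_cartesian_product finite_bounded_msets)
qed

lemma XS_invol:
  fixes g :: "nat multiset \<times> nat multiset \<Rightarrow> int"
  assumes B: "0 \<notin> B"
    and g: "\<And>U D U' D'. (odd (size U') \<longleftrightarrow> even (size U)) \<Longrightarrow> (odd (size D') \<longleftrightarrow> even (size D))
              \<Longrightarrow> g (U', D') = - g (U, D)"
  shows "sum g (XS B E m) = sum g {(U, D) \<in> XS B E m. set_mset U \<union> set_mset D \<subseteq> E}"
proof (rule sum_invol[where \<iota> = "tog E"])
  show "finite (XS B E m)" using B by (rule finite_XS)
  show "{(U, D) \<in> XS B E m. set_mset U \<union> set_mset D \<subseteq> E} \<subseteq> XS B E m" by auto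
next
  fix x assume x: "x \<in> XS B E m - {(U, D) \<in> XS B E m. set_mset U \<union> set_mset D \<subseteq> E}"
  obtain U D where xUD: "x = (U, D)" by (cases x)
  obtain U' D' where t: "tog E (U, D) = (U', D')" by (cases "tog E (U, D)")
  have h: "set_mset U \<subseteq> B" "set_mset D \<subseteq> B - E" "\<forall>y. count D y \<le> 1" "sum_mset U + sum_mset D = m"
    "\<not> set_mset U \<union> set_mset D \<subseteq> E" using x xUD unfolding XS_def by auto
  have dE: "set_mset D \<inter> E = {}" using h(2) by auto
  have ne: "(set_mset U \<union> set_mset D) - E \<noteq> {}" using h(5) by auto
  note P = tog_props[OF h(3) dE ne t]
  have "set_mset D' \<subseteq> B - E" using P(3,4) h(1,2) by blast
  moreover have "set_mset U' \<subseteq> B" using P(4) h(1,2) by blast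
  moreover have "sum_mset U' + sum_mset D' = m" using P(5) h(4) by simp
  moreover have "\<not> set_mset U' \<union> set_mset D' \<subseteq> E" using P(4) h(5) by simp
  ultimately show "tog E x \<in> XS B E m - {(U, D) \<in> XS B E m. set_mset U \<union> set_mset D \<subseteq> E}"
    using P(2) xUD t unfolding XS_def by simp
  show "tog E (tog E x) = x" using P(1) xUD t by simp
  show "g (tog E x) = - g x" using P(6,7) xUD t g by simp
qed

definition marks :: "nat multiset \<Rightarrow> (nat \<times> nat) set" where
  "marks M = Sigma (set_mset M) (\<lambda>a. {1..count M a})"

lemma finite_marks: "finite (marks M)"
  unfolding marks_def by auto

lemma card_marks: "card (marks M) = size M"
  unfolding marks_def by (simp add: size_multiset_overloaded_eq)

lemma sign_flip: "(odd a \<longleftrightarrow> even (b::nat)) \<Longrightarrow> (-1::int) ^ a = - ((-1) ^ b)"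
  by (auto simp: minus_one_power_iff)

lemma flatten4:
  assumes "finite K" "\<And>k. finite (P k)" "\<And>M. finite (Q M)" "\<And>k. finite (R k)"
  shows "(\<Sum>k\<in>K. \<Sum>M\<in>P k. \<Sum>m\<in>Q M. \<Sum>D\<in>R k. f D) =
         (\<Sum>(k, M, m, D) \<in> Sigma K (\<lambda>k. Sigma (P k) (\<lambda>M. Q M \<times> R k)). f D)"
proof -
  have "(\<Sum>k\<in>K. \<Sum>M\<in>P k. \<Sum>m\<in>Q M. \<Sum>D\<in>R k. f D) =
        (\<Sum>k\<in>K. \<Sum>M\<in>P k. \<Sum>(m, D)\<in>Q M \<times> R k. f D)"
    by (simp add: sum.cartesian_product)
  also have "\<dots> = (\<Sum>k\<in>K. \<Sum>(M, m, D)\<in>Sigma (P k) (\<lambda>M. Q M \<times> R k). f D)"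
    using assms by (subst sum.Sigma) auto
  also have "\<dots> = (\<Sum>(k, M, m, D) \<in> Sigma K (\<lambda>k. Sigma (P k) (\<lambda>M. Q M \<times> R k)). f D)"
    using assms by (subst sum.Sigma) (auto intro!: finite_SigmaI)
  finally show ?thesis .
qed

lemma XS_empty_sum:
  assumes "0 \<notin> B"
  shows "(\<Sum>(U, D)\<in>XS B {} m. (-1::int) ^ size D) = (if m = 0 then 1 else 0)"
proof -
  have "(\<Sum>(U, D)\<in>XS B {} m. (-1::int) ^ size D) =
        (\<Sum>(U, D)\<in>{(U, D) \<in> XS B {} m. set_mset U \<union> set_mset D \<subseteq> {}}. (-1::int) ^ size D)"
    using assms by (rule XS_invol) (auto intro: sign_flip)
  also have "{(U, D) \<in> XS B {} m. set_mset U \<union> set_mset D \<subseteq> {}} = (if m = 0 then {({#}, {#})} else {})"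
    unfolding XS_def by auto
  finally show ?thesis by simp
qed

lemma partA:
  assumes A0: "0 \<notin> A" and n: "n > 0"
  shows "(\<Sum>k=1..n. int (Np A k) * (int (qe A (n - k)) - int (qo A (n - k)))) = int (tauA A n)"
proof -
  let ?PA = "partitions_A A" and ?DA = "dpartitions_A A"
  let ?f = "\<lambda>D::nat multiset. (-1::int) ^ size D"
  define SIG where "SIG = Sigma {1..n} (\<lambda>k. Sigma (?PA k) (\<lambda>M. marks M \<times> ?DA (n - k)))"
  have Apos: "\<forall>a\<in>A. 0 < a" using A0 by (metis gr0I)
  define AJ where "AJ = {(a, j). a \<in> A \<and> 1 \<le> j \<and> a * j \<le> n}"
  have fAJ: "finite AJ"
  proof (rule finite_subset[of _ "{0..n} \<times> {0..n}"])
    show "AJ \<subseteq> {0..n} \<times> {0..n}"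
    proof (clarsimp simp: AJ_def)
      fix a j assume h: "a \<in> A" "Suc 0 \<le> j" "a * j \<le> n"
      have "a \<noteq> 0" using h(1) A0 by (metis)
      then have "j \<le> a * j" "a \<le> a * j" using h(2) by simp_all
      then show "a \<le> n \<and> j \<le> n" using h(3) by linarith
    qed
  qed simp
  define RT where "RT = Sigma AJ (\<lambda>(a, j). XS A {} (n - a * j))"
  have s1: "int (Np A k) * (int (qe A (n - k)) - int (qo A (n - k))) =
      (\<Sum>M\<in>?PA k. \<Sum>m\<in>marks M. \<Sum>D\<in>?DA (n - k). ?f D)" for k
    unfolding Np_def qe_def qo_def
    by (simp add: card_even_odd finite_DA A0 sum_distrib_right card_marks of_nat_sum)
  have "(\<Sum>k=1..n. int (Np A k) * (int (qe A (n - k)) - int (qo A (n - k)))) =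
        (\<Sum>k=1..n. \<Sum>M\<in>?PA k. \<Sum>m\<in>marks M. \<Sum>D\<in>?DA (n - k). ?f D)"
    using s1 by simp
  also have "\<dots> = (\<Sum>(k, M, m, D)\<in>SIG. ?f D)"
    unfolding SIG_def by (rule flatten4) (auto simp: finite_PA finite_DA A0 finite_marks)
  also have "\<dots> = (\<Sum>((a, j), (U, D))\<in>RT. ?f D)"
  proof (rule sum.reindex_bij_witness[where
        j = "\<lambda>(k, M, (a, j), D). ((a, j), (M - replicate_mset j a, D))" and
        i = "\<lambda>((a, j), (U, D)). (a * j + sum_mset U, U + replicate_mset j a, (a, j), D)"])
    fix x assume x: "x \<in> SIG"
    obtain k M a j D where xd: "x = (k, M, (a, j), D)" by (metis prod.exhaust)
    have h: "k \<in> {1..n}" "set_mset M \<subseteq> A" "sum_mset M = k" "a \<in># M" "1 \<le> j" "j \<le> count M a"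
      "set_mset D \<subseteq> A" "\<forall>y. count D y \<le> 1" "sum_mset D = n - k"
      using x xd unfolding SIG_def partitions_A_def dpartitions_A_def marks_def by auto
    have Msplit: "M = (M - replicate_mset j a) + replicate_mset j a"
      using h(6) by (simp add: count_le_replicate_mset_subset_eq subset_mset.diff_add)
    have sumM: "sum_mset M = sum_mset (M - replicate_mset j a) + j * a"
      by (subst Msplit) simp
    show "(\<lambda>((a, j), (U, D)). (a * j + sum_mset U, U + replicate_mset j a, (a, j), D))
          ((\<lambda>(k, M, (a, j), D). ((a, j), (M - replicate_mset j a, D))) x) = x"
      using xd h sumM Msplit[symmetric] by (simp add: mult.commute)
    have "a \<in> A" using h by auto
    moreover have "set_mset (M - replicate_mset j a) \<subseteq> A" using h(2) by (meson in_diffD subset_iff)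
    ultimately show "(\<lambda>(k, M, (a, j), D). ((a, j), (M - replicate_mset j a, D))) x \<in> RT"
      using xd h sumM unfolding RT_def AJ_def XS_def by (auto simp: mult.commute)
    show "(\<lambda>((a, j), (U, D)). ?f D) ((\<lambda>(k, M, (a, j), D). ((a, j), (M - replicate_mset j a, D))) x) = (\<lambda>(k, M, m, D). ?f D) x"
      using xd by simp
  next
    fix y assume y: "y \<in> RT"
    obtain a j U D where yd: "y = ((a, j), (U, D))" by (metis prod.exhaust)
    have h: "a \<in> A" "1 \<le> j" "a * j \<le> n" "set_mset U \<subseteq> A" "set_mset D \<subseteq> A" "\<forall>y. count D y \<le> 1"
      "sum_mset U + sum_mset D = n - a * j"
      using y yd unfolding RT_def AJ_def XS_def by auto
    have a0: "a > 0" using h(1) A0 by (metis gr0I)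
    show "(\<lambda>(k, M, (a, j), D). ((a, j), (M - replicate_mset j a, D)))
          ((\<lambda>((a, j), (U, D)). (a * j + sum_mset U, U + replicate_mset j a, (a, j), D)) y) = y"
      using yd by simp
    have "a * j \<ge> 1" using a0 h(2) by simp
    then have k1: "Suc 0 \<le> a * j + sum_mset U" by linarith
    then show "(\<lambda>((a, j), (U, D)). (a * j + sum_mset U, U + replicate_mset j a, (a, j), D)) y \<in> SIG"
      using yd h k1 unfolding SIG_def partitions_A_def dpartitions_A_def marks_def
      by (auto simp: mult.commute)
  qed
  also have "\<dots> = (\<Sum>(a, j)\<in>AJ. \<Sum>(U, D)\<in>XS A {} (n - a * j). ?f D)"
  proof -
    have "(\<Sum>(a, j)\<in>AJ. \<Sum>(U, D)\<in>XS A {} (n - a * j). ?f D) = (\<Sum>p\<in>AJ. \<Sum>q\<in>XS A {} (n - fst p * snd p). ?f (snd q))"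
      by (simp add: split_def)
    also have "\<dots> = (\<Sum>(p, q)\<in>RT. ?f (snd q))"
      unfolding RT_def using fAJ A0 by (subst sum.Sigma) (auto simp: finite_XS split_def)
    finally show ?thesis by (simp add: split_def)
  qed
  also have "\<dots> = (\<Sum>(a, j)\<in>AJ. if n - a * j = 0 then 1 else 0)"
    by (rule sum.cong[OF refl]) (clarsimp simp: XS_empty_sum[OF A0])
  also have "\<dots> = (\<Sum>p\<in>{p\<in>AJ. fst p * snd p = n}. 1)"
    unfolding sum.inter_filter[OF fAJ] by (rule sum.cong[OF refl]) (auto simp: AJ_def)
  also have "{p\<in>AJ. fst p * snd p = n} = (\<lambda>a. (a, n div a)) ` {a\<in>A. a dvd n}"
  proof (intro equalityI subsetI)
    fix p assume p: "p \<in> {p\<in>AJ. fst p * snd p = n}"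
    obtain a j where pd: "p = (a, j)" by (cases p)
    have "a \<in> A" "a * j = n" using p pd unfolding AJ_def by auto
    then show "p \<in> (\<lambda>a. (a, n div a)) ` {a \<in> A. a dvd n}"
      using Apos pd by (intro image_eqI[of _ _ a]) auto
  next
    fix p assume "p \<in> (\<lambda>a. (a, n div a)) ` {a \<in> A. a dvd n}"
    then obtain a where pd: "p = (a, n div a)" "a \<in> A" "a dvd n" by auto
    have e: "a * (n div a) = n" using pd(3) by simp
    then have "n div a \<noteq> 0" using n by (metis mult_0_right less_numeral_extra(3))
    then show "p \<in> {p\<in>AJ. fst p * snd p = n}"
      unfolding AJ_def using n pd e by (auto simp: Suc_le_eq)
  qed
  also have "(\<Sum>p\<in>(\<lambda>a. (a, n div a)) ` {a\<in>A. a dvd n}. 1::int) = int (tauA A n)"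
    unfolding tauA_def by (subst card_image[symmetric]) (auto simp: inj_on_def)

  finally show ?thesis .
qed

lemma XS_single_sum:
  assumes B0: "0 \<notin> B" and aB: "a \<in> B"
  shows "(\<Sum>(U, D)\<in>XS B {a} m. (-1::int) ^ size U) = (if a dvd m then (-1) ^ (m div a) else 0)"
proof -
  have a0: "a > 0" using B0 aB by (metis gr0I)
  have "(\<Sum>(U, D)\<in>XS B {a} m. (-1::int) ^ size U) =
        (\<Sum>(U, D)\<in>{(U, D) \<in> XS B {a} m. set_mset U \<union> set_mset D \<subseteq> {a}}. (-1::int) ^ size U)"
    using B0 by (rule XS_invol) (auto intro: sign_flip)
  also have "{(U, D) \<in> XS B {a} m. set_mset U \<union> set_mset D \<subseteq> {a}} =
      (if a dvd m then {(replicate_mset (m div a) a, {#})} else {})"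
  proof (intro equalityI subsetI)
    fix p :: "nat multiset \<times> nat multiset"
    assume p: "p \<in> {(U, D) \<in> XS B {a} m. set_mset U \<union> set_mset D \<subseteq> {a}}"
    obtain U D where pd: "p = (U, D)" by (cases p)
    have h: "set_mset U \<subseteq> {a}" "set_mset D \<subseteq> B - {a}" "set_mset D \<subseteq> {a}" "sum_mset U + sum_mset D = m"
      using p pd unfolding XS_def by auto
    have D: "D = {#}" using h(2,3) by auto
    have U: "U = replicate_mset (size U) a" using h(1) by (rule set_mset_subset_singletonD)
    have "size U * a = m" using h(4) D by (subst (asm) U) simp
    then have "a dvd m" "size U = m div a" using a0 by auto
    then show "p \<in> (if a dvd m then {(replicate_mset (m div a) a, {#})} else {})"
      using pd D U by simp
  next
    fix p :: "nat multiset \<times> nat multiset"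
    assume p: "p \<in> (if a dvd m then {(replicate_mset (m div a) a, {#})} else {})"
    then have "a dvd m" and pd: "p = (replicate_mset (m div a) a, {#})" by (auto split: if_splits)
    then show "p \<in> {(U, D) \<in> XS B {a} m. set_mset U \<union> set_mset D \<subseteq> {a}}"
      using aB unfolding XS_def by auto
  qed
  finally show ?thesis by simp
qed

lemma partB:
  assumes A0: "0 \<notin> A" and n: "n > 0"
  shows "(\<Sum>k=1..n. int (Nq A k) * (int (pe A (n - k)) - int (po A (n - k)))) = tauA_s A n"
proof -
  let ?PA = "partitions_A A" and ?DA = "dpartitions_A A"
  let ?f = "\<lambda>D::nat multiset. (-1::int) ^ size D"
  have Apos: "\<forall>a\<in>A. 0 < a" using A0 by (metis gr0I)
  define SIG where "SIG = Sigma {1..n} (\<lambda>k. Sigma (?DA k) (\<lambda>M. marks M \<times> ?PA (n - k)))"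
  define A' where "A' = {a\<in>A. a \<le> n}"
  have fA': "finite A'" unfolding A'_def by (rule finite_subset[of _ "{0..n}"]) auto
  define RT where "RT = Sigma A' (\<lambda>a. XS A {a} (n - a))"
  have s1: "int (Nq A k) * (int (pe A (n - k)) - int (po A (n - k))) =
      (\<Sum>M\<in>?DA k. \<Sum>m\<in>marks M. \<Sum>D\<in>?PA (n - k). ?f D)" for k
    unfolding Nq_def pe_def po_def
    by (simp add: card_even_odd finite_PA A0 sum_distrib_right card_marks of_nat_sum)
  have "(\<Sum>k=1..n. int (Nq A k) * (int (pe A (n - k)) - int (po A (n - k)))) =
        (\<Sum>k=1..n. \<Sum>M\<in>?DA k. \<Sum>m\<in>marks M. \<Sum>D\<in>?PA (n - k). ?f D)"
    using s1 by simp
  also have "\<dots> = (\<Sum>(k, M, m, D)\<in>SIG. ?f D)"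
    unfolding SIG_def by (rule flatten4) (auto simp: finite_PA finite_DA A0 finite_marks)
  also have "\<dots> = (\<Sum>(a, (U, D))\<in>RT. ?f U)"
  proof (rule sum.reindex_bij_witness[where
        j = "\<lambda>(k, M, (a, j), S). (a, (S, M - {#a#}))" and
        i = "\<lambda>(a, (U, D)). (a + sum_mset D, add_mset a D, (a, 1), U)"])
    fix x assume x: "x \<in> SIG"
    obtain k M a j S where xd: "x = (k, M, (a, j), S)" by (metis prod.exhaust)
    have h: "k \<in> {1..n}" "set_mset M \<subseteq> A" "sum_mset M = k" "a \<in># M" "1 \<le> j" "j \<le> count M a"
      "\<forall>y. count M y \<le> 1" "set_mset S \<subseteq> A" "sum_mset S = n - k"
      using x xd unfolding SIG_def partitions_A_def dpartitions_A_def marks_def by auto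
    have j1: "j = 1" using h(5,6,7) by (metis le_antisym order.trans)
    have cM: "count M a = 1" using h(4,7) by (metis count_eq_zero_iff le_antisym less_one not_le)
    have Mi: "add_mset a (M - {#a#}) = M" using h(4) by simp
    have sumM: "sum_mset M = a + sum_mset (M - {#a#})" using h(4) by (simp add: sum_mset.remove)
    show "(\<lambda>(a, (U, D)). (a + sum_mset D, add_mset a D, (a, 1), U))
          ((\<lambda>(k, M, (a, j), S). (a, (S, M - {#a#}))) x) = x"
      using xd h sumM Mi j1 by simp
    have aA: "a \<in> A" using h by auto
    have nD: "a \<notin># M - {#a#}" using cM by (simp add: not_in_iff)
    have "set_mset (M - {#a#}) \<subseteq> A - {a}" using h(2) nD by (auto dest: in_diffD)
    moreover have "\<forall>y. count (M - {#a#}) y \<le> 1" using h(7) by (simp add: diff_le_self order.trans)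
    ultimately show "(\<lambda>(k, M, (a, j), S). (a, (S, M - {#a#}))) x \<in> RT"
      using xd h sumM aA unfolding RT_def A'_def XS_def by auto
    show "(\<lambda>(a, (U, D)). ?f U) ((\<lambda>(k, M, (a, j), S). (a, (S, M - {#a#}))) x) = (\<lambda>(k, M, m, D). ?f D) x"
      using xd by simp
  next
    fix y assume y: "y \<in> RT"
    obtain a U D where yd: "y = (a, (U, D))" by (metis prod.exhaust)
    have h: "a \<in> A" "a \<le> n" "set_mset U \<subseteq> A" "set_mset D \<subseteq> A - {a}" "\<forall>y. count D y \<le> 1"
      "sum_mset U + sum_mset D = n - a"
      using y yd unfolding RT_def A'_def XS_def by (auto simp: mem_Sigma_iff)
    have a0: "a > 0" using h(1) Apos by auto
    have naD: "count D a = 0" using h(4) by (auto simp: not_in_iff[symmetric])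
    show "(\<lambda>(k, M, (a, j), S). (a, (S, M - {#a#})))
          ((\<lambda>(a, (U, D)). (a + sum_mset D, add_mset a D, (a, 1), U)) y) = y"
      using yd by simp
    have k1: "Suc 0 \<le> a + sum_mset D" using a0 by linarith
    have "count (add_mset a D) y \<le> 1" for y using h(5) naD by (cases "y = a") auto
    then show "(\<lambda>(a, (U, D)). (a + sum_mset D, add_mset a D, (a, 1), U)) y \<in> SIG"
      using yd h k1 unfolding SIG_def partitions_A_def dpartitions_A_def marks_def
      by auto
  qed
  also have "\<dots> = (\<Sum>a\<in>A'. \<Sum>(U, D)\<in>XS A {a} (n - a). ?f U)"
  proof -
    have "(\<Sum>a\<in>A'. \<Sum>(U, D)\<in>XS A {a} (n - a). ?f U) = (\<Sum>a\<in>A'. \<Sum>q\<in>XS A {a} (n - a). ?f (fst q))"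
      by (simp add: split_def)
    also have "\<dots> = (\<Sum>(a, q)\<in>RT. ?f (fst q))"
      unfolding RT_def using fA' A0 by (subst sum.Sigma) (auto simp: finite_XS split_def)
    finally show ?thesis by (simp add: split_def)
  qed
  also have "\<dots> = (\<Sum>a\<in>A'. if a dvd (n - a) then (-1::int) ^ ((n - a) div a) else 0)"
    by (rule sum.cong[OF refl]) (use A0 in \<open>auto simp: XS_single_sum A'_def\<close>)
  also have "\<dots> = (\<Sum>a\<in>A'. if a dvd n then (-1::int) ^ (n div a - 1) else 0)"
  proof (rule sum.cong[OF refl])
    fix a assume "a \<in> A'"
    then have an: "a \<le> n" "a > 0" using Apos unfolding A'_def by auto
    have e: "n = (n - a) + a" using an by simp
    have dv: "a dvd (n - a) \<longleftrightarrow> a dvd n" by (subst (2) e) simp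
    have "((n - a) + a) div a = (n - a) div a + 1" using an by (intro div_add_self2) simp
    then have "n div a = (n - a) div a + 1" using e by simp
    then have "(n - a) div a = n div a - 1" by simp
    then show "(if a dvd (n - a) then (-1::int) ^ ((n - a) div a) else 0) = (if a dvd n then (-1) ^ (n div a - 1) else 0)"
      using dv by simp
  qed
  also have "\<dots> = tauA_s A n"
  proof -
    have e: "{a\<in>A. a dvd n} = {a\<in>A'. a dvd n}" unfolding A'_def using n by (auto dest: dvd_imp_le)
    show ?thesis unfolding tauA_s_def e sum.inter_filter[OF fA'] by (rule sum.cong) auto
  qed
  finally show ?thesis .
qed

theorem theorem2:
  fixes A :: "nat set" and n :: nat
  assumes "A \<noteq> {}" and "0 \<notin> A" and "n > 0"
  shows "(\<Sum>k=1..n. int (Np A k) * (int (qe A (n - k)) - int (qo A (n - k)))) = int (tauA A n)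
       \<and> (\<Sum>k=1..n. int (Nq A k) * (int (pe A (n - k)) - int (po A (n - k)))) = tauA_s A n"
  using partA[OF assms(2,3)] partB[OF assms(2,3)] by simp

end
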